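(* The functor $P:\ell\text{-BS}\to\ell\text{-BSYM}$ is left adjoint to the functor $\mathrm{Ext}_\ell:\ell\text{-BSYM}\to\ell\text{-BS}$. The counit at an object $(X,A,\models)$ is $\xi_{(X,A,\models)}=(\mathrm{id}_X,\mathrm{ext}_\ell):P(\mathrm{Ext}_\ell(X,A,\models))\to(X,A,\models)$, where $\mathrm{ext}_\ell:A\to\mathrm{Cont}(\mathrm{Ext}_\ell(X,A,\models))$ sends $a$ to the function $x\mapsto\models(x,a)$; i.e. for every object $(S,\alpha)$ of $\ell$-BS and every $\ell$-BSYM arrow $(f,\phi):P(S,\alpha)\to(X,A,\models)$ there is a unique $\ell$-BS arrow $\tilde f:(S,\alpha)\to\mathrm{Ext}_\ell(X,A,\models)$ with $(f,\phi)=\xi_{(X,A,\models)}\circ P(\tilde f)$ (namely $\tilde f=f$).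
   Context: Throughout, $\ell$ is a fixed finite distributive lattice with bottom $0$ and top $1$, regarded as a Heyting algebra with relative pseudocomplement $\to$, and equipped with unary operations $T_r$ ($r\in\ell$) given by $T_r(x)=1$ if $x=r$ and $T_r(x)=0$ otherwise. An $\ell$-VL-algebra is an algebra $(A,\wedge,\vee,\to,(T_r)_{r\in\ell},0,1)$ of this signature belonging to the variety generated by $\ell$ (equivalently, algebras isomorphic to subalgebras of direct powers of $\ell$); homomorphisms preserve all these operations. $\mathrm{Subalg}(\ell)$ is the set of subalgebras of $\ell$. A Boolean space is a compact Hausdorff zero-dimensional space; $\ell$ and its subalgebras carry the discrete topology. The category $\ell$-BS has as objects pairs $(S,\alpha)$ with $S$ a Boolean space and $\alpha$ a map from $\mathrm{Subalg}(\ell)$ to the closed subspaces of $S$ with $\alpha(\ell)=S$ and $\alpha(L_1\cap L_2)=\alpha(L_1)\cap\alpha(L_2)$; its arrows $f:(S_1,\alpha_1)\to(S_2,\alpha_2)$ are continuous maps with $f(\alpha_1(L))\subseteq\alpha_2(L)$ for all $L$. $\mathrm{Cont}(S,\alpha)$ is the set of continuous maps $v:S\to\ell$ with $v(\alpha(L))\subseteq L$ for all $L\in\mathrm{Subalg}(\ell)$, an $\ell$-VL-algebra under pointwise operations. An $\ell$-Boolean system is a triple $(X,A,\models)$ where $X$ is a nonempty set, $A$ is an $\ell$-VL-algebra, and $\models:X\times A\to\ell$ is a map such that for all $x\in X$, $a,b\in A$, $r\in\ell$: (1) $\models(x,\bigvee A_1)=\bigvee_{a\in A_1}\models(x,a)$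 for every subset $A_1\subseteq A$ (whose join exists in $A$), and $\models(x,a\wedge b)=\models(x,a)\wedge\models(x,b)$; (2) if $x_1\neq x_2$ then $\models(x_1,a)\neq\models(x_2,a)$ for some $a$; (3) $\models(x,a\to b)=\models(x,a)\to\models(x,b)$; (4) $\models(x,T_r(a))=T_r(\models(x,a))$; (5) $\models(x,0)=0$, $\models(x,1)=1$. The category $\ell$-BSYM has these as objects; an arrow $(\psi_1,\psi_2):(X,A,\models_1)\to(Y,B,\models_2)$ is a function $\psi_1:X\to Y$ with an $\ell$-VL-algebra homomorphism $\psi_2:B\to A$ such that $\models_1(x,\psi_2(b))=\models_2(\psi_1(x),b)$; composition is $(\phi_1,\phi_2)\circ(\psi_1,\psi_2)=(\phi_1\circ\psi_1,\psi_2\circ\phi_2)$. Functors: $\mathrm{Ext}_\ell(X,A,\models)=((X,\tau_A),\alpha_A)$, where $\tau_A$ is the topology on $X$ generated by the sets $\{x\in X:\models(x,a)=r\}$ ($a\in A$, $r\in\ell$) and $\alpha_A(K)=\{x\in X:\models(x,a)\in K\text{ for all }a\in A\}$ for $K\in\mathrm{Subalg}(\ell)$; $\mathrm{Ext}_\ell(\psi_1,\psi_2)=\psi_1$. $P(S,\alpha)=(S,\mathrm{Cont}(S,\alpha),\models_S)$ with $\models_S(s,v)=v(s)$, and $P(f)=(f,f^{-1})$ with $f^{-1}(v)=v\circ f$. *)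

theory Defs
  imports "HOL-Analysis.Analysis" "HOL-Library.FuncSet"
begin

definition himp :: "'l::finite_distrib_lattice \<Rightarrow> 'l \<Rightarrow> 'l" where
  "himp x y = Sup {z. inf z x \<le> y}"

definition Tl :: "'l::finite_distrib_lattice \<Rightarrow> 'l \<Rightarrow> 'l" where
  "Tl r x = (if x = r then top else bot)"

definition Subalg :: "'l::finite_distrib_lattice set set" where
  "Subalg = {L. bot \<in> L \<and> top \<in> L \<and>
     (\<forall>x\<in>L. \<forall>y\<in>L. inf x y \<in> L \<and> sup x y \<in> L \<and> himp x y \<in> L) \<and>
     (\<forall>r. \<forall>x\<in>L. Tl r x \<in> L)}"

record ('a, 'l) valg =
  vcarrier :: "'a set"
  vmeet :: "'a \<Rightarrow> 'a \<Rightarrow> 'a"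
  vjoin :: "'a \<Rightarrow> 'a \<Rightarrow> 'a"
  vimp :: "'a \<Rightarrow> 'a \<Rightarrow> 'a"
  vT :: "'l \<Rightarrow> 'a \<Rightarrow> 'a"
  vzero :: "'a"
  vone :: "'a"

definition valg_closed :: "('a, 'l) valg \<Rightarrow> bool" where
  "valg_closed A \<longleftrightarrow> vzero A \<in> vcarrier A \<and> vone A \<in> vcarrier A \<and>
     (\<forall>a\<in>vcarrier A. \<forall>b\<in>vcarrier A. vmeet A a b \<in> vcarrier A \<and> vjoin A a b \<in> vcarrier A
        \<and> vimp A a b \<in> vcarrier A) \<and>
     (\<forall>r. \<forall>a\<in>vcarrier A. vT A r a \<in> vcarrier A)"

definition valg_hom :: "('a, 'l) valg \<Rightarrow> ('b, 'l) valg \<Rightarrow> ('a \<Rightarrow> 'b) \<Rightarrow> bool" where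
  "valg_hom A B h \<longleftrightarrow> (\<forall>a\<in>vcarrier A. h a \<in> vcarrier B) \<and>
     (\<forall>a\<in>vcarrier A. \<forall>b\<in>vcarrier A.
        h (vmeet A a b) = vmeet B (h a) (h b) \<and> h (vjoin A a b) = vjoin B (h a) (h b) \<and>
        h (vimp A a b) = vimp B (h a) (h b)) \<and>
     (\<forall>r. \<forall>a\<in>vcarrier A. h (vT A r a) = vT B r (h a)) \<and>
     h (vzero A) = vzero B \<and> h (vone A) = vone B"

text \<open>An \<open>\<ell>\<close>-VL-algebra: an algebra isomorphic to a subalgebra of a direct power \<open>\<ell>^I\<close>.
  The index set I is taken inside the type \<open>'a \<Rightarrow> 'l\<close>, which is large enough (the
  homomorphisms A \<rightarrow> \<open>\<ell>\<close> live there).\<close>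
definition vl_algebra :: "('a, 'l::finite_distrib_lattice) valg \<Rightarrow> bool" where
  "vl_algebra A \<longleftrightarrow> valg_closed A \<and>
     (\<exists>(I :: ('a \<Rightarrow> 'l) set) (h :: 'a \<Rightarrow> ('a \<Rightarrow> 'l) \<Rightarrow> 'l).
        (\<forall>a\<in>vcarrier A. \<forall>b\<in>vcarrier A. a \<noteq> b \<longrightarrow> (\<exists>i\<in>I. h a i \<noteq> h b i)) \<and>
        (\<forall>i\<in>I.
           (\<forall>a\<in>vcarrier A. \<forall>b\<in>vcarrier A.
              h (vmeet A a b) i = inf (h a i) (h b i) \<and>
              h (vjoin A a b) i = sup (h a i) (h b i) \<and>
              h (vimp A a b) i = himp (h a i) (h b i)) \<and>
           (\<forall>r. \<forall>a\<in>vcarrier A. h (vT A r a) i = Tl r (h a i)) \<and>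
           h (vzero A) i = bot \<and> h (vone A) i = top))"

definition vle :: "('a, 'l) valg \<Rightarrow> 'a \<Rightarrow> 'a \<Rightarrow> bool" where
  "vle A a b \<longleftrightarrow> vmeet A a b = a"

definition is_vjoin :: "('a, 'l) valg \<Rightarrow> 'a set \<Rightarrow> 'a \<Rightarrow> bool" where
  "is_vjoin A A1 c \<longleftrightarrow> c \<in> vcarrier A \<and> (\<forall>a\<in>A1. vle A a c) \<and>
     (\<forall>d\<in>vcarrier A. (\<forall>a\<in>A1. vle A a d) \<longrightarrow> vle A c d)"

definition boolean_space :: "'s topology \<Rightarrow> bool" where
  "boolean_space S \<longleftrightarrow> compact_space S \<and> Hausdorff_space S \<and> S dim_le 0"

definition BS_obj :: "'s topology \<Rightarrow> ('l::finite_distrib_lattice set \<Rightarrow> 's set) \<Rightarrow> bool" where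
  "BS_obj S \<alpha> \<longleftrightarrow> boolean_space S \<and> (\<forall>L\<in>Subalg. closedin S (\<alpha> L)) \<and>
     \<alpha> UNIV = topspace S \<and> (\<forall>L1\<in>Subalg. \<forall>L2\<in>Subalg. \<alpha> (L1 \<inter> L2) = \<alpha> L1 \<inter> \<alpha> L2)"

definition BS_arrow :: "'s topology \<Rightarrow> ('l::finite_distrib_lattice set \<Rightarrow> 's set) \<Rightarrow>
    't topology \<Rightarrow> ('l set \<Rightarrow> 't set) \<Rightarrow> ('s \<Rightarrow> 't) \<Rightarrow> bool" where
  "BS_arrow S1 \<alpha>1 S2 \<alpha>2 f \<longleftrightarrow> continuous_map S1 S2 f \<and> (\<forall>L\<in>Subalg. f ` \<alpha>1 L \<subseteq> \<alpha>2 L)"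

text \<open>Cont(S,\<open>\<alpha>\<close>): continuous maps into discrete \<open>\<ell>\<close>, represented extensionally on the points of S.\<close>
definition Cont :: "'s topology \<Rightarrow> ('l::finite_distrib_lattice set \<Rightarrow> 's set) \<Rightarrow> ('s \<Rightarrow> 'l) set" where
  "Cont S \<alpha> = {v. v \<in> extensional (topspace S) \<and>
      continuous_map S (discrete_topology (UNIV :: 'l set)) v \<and> (\<forall>L\<in>Subalg. v ` \<alpha> L \<subseteq> L)}"

definition Cont_alg :: "'s topology \<Rightarrow> ('l::finite_distrib_lattice set \<Rightarrow> 's set) \<Rightarrow> ('s \<Rightarrow> 'l, 'l) valg" where
  "Cont_alg S \<alpha> = \<lparr> vcarrier = Cont S \<alpha>,
      vmeet = (\<lambda>v w. restrict (\<lambda>s. inf (v s) (w s)) (topspace S)),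
      vjoin = (\<lambda>v w. restrict (\<lambda>s. sup (v s) (w s)) (topspace S)),
      vimp = (\<lambda>v w. restrict (\<lambda>s. himp (v s) (w s)) (topspace S)),
      vT = (\<lambda>r v. restrict (\<lambda>s. Tl r (v s)) (topspace S)),
      vzero = restrict (\<lambda>s. bot) (topspace S),
      vone = restrict (\<lambda>s. top) (topspace S) \<rparr>"

definition BSYM_obj :: "'x set \<Rightarrow> ('a, 'l::finite_distrib_lattice) valg \<Rightarrow> ('x \<Rightarrow> 'a \<Rightarrow> 'l) \<Rightarrow> bool" where
  "BSYM_obj X A m \<longleftrightarrow> X \<noteq> {} \<and> vl_algebra A \<and>
     (\<forall>x\<in>X.
        (\<forall>A1 c. A1 \<subseteq> vcarrier A \<longrightarrow> is_vjoin A A1 c \<longrightarrow> m x c = Sup ((\<lambda>a. m x a) ` A1)) \<and>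
        (\<forall>a\<in>vcarrier A. \<forall>b\<in>vcarrier A. m x (vmeet A a b) = inf (m x a) (m x b)) \<and>
        (\<forall>a\<in>vcarrier A. \<forall>b\<in>vcarrier A. m x (vimp A a b) = himp (m x a) (m x b)) \<and>
        (\<forall>r. \<forall>a\<in>vcarrier A. m x (vT A r a) = Tl r (m x a)) \<and>
        m x (vzero A) = bot \<and> m x (vone A) = top) \<and>
     (\<forall>x1\<in>X. \<forall>x2\<in>X. x1 \<noteq> x2 \<longrightarrow> (\<exists>a\<in>vcarrier A. m x1 a \<noteq> m x2 a))"

definition BSYM_arrow :: "'x set \<Rightarrow> ('a, 'l) valg \<Rightarrow> ('x \<Rightarrow> 'a \<Rightarrow> 'l) \<Rightarrow>
    'y set \<Rightarrow> ('b, 'l) valg \<Rightarrow> ('y \<Rightarrow> 'b \<Rightarrow> 'l) \<Rightarrow> ('x \<Rightarrow> 'y) \<times> ('b \<Rightarrow> 'a) \<Rightarrow> bool" where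
  "BSYM_arrow X A m1 Y B m2 p \<longleftrightarrow> (\<forall>x\<in>X. fst p x \<in> Y) \<and> valg_hom B A (snd p) \<and>
     (\<forall>x\<in>X. \<forall>b\<in>vcarrier B. m1 x (snd p b) = m2 (fst p x) b)"

definition BSYM_comp :: "('y \<Rightarrow> 'z) \<times> ('c \<Rightarrow> 'b) \<Rightarrow> ('x \<Rightarrow> 'y) \<times> ('b \<Rightarrow> 'a) \<Rightarrow> ('x \<Rightarrow> 'z) \<times> ('c \<Rightarrow> 'a)" where
  "BSYM_comp \<phi> \<psi> = (fst \<phi> \<circ> fst \<psi>, snd \<psi> \<circ> snd \<phi>)"

definition BSYM_arrow_eq :: "'x set \<Rightarrow> ('b, 'l) valg \<Rightarrow> ('x \<Rightarrow> 'y) \<times> ('b \<Rightarrow> 'a) \<Rightarrow> ('x \<Rightarrow> 'y) \<times> ('b \<Rightarrow> 'a) \<Rightarrow> bool" where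
  "BSYM_arrow_eq X B p q \<longleftrightarrow> (\<forall>x\<in>X. fst p x = fst q x) \<and> (\<forall>b\<in>vcarrier B. snd p b = snd q b)"

definition Ext_top :: "'x set \<Rightarrow> ('a, 'l) valg \<Rightarrow> ('x \<Rightarrow> 'a \<Rightarrow> 'l) \<Rightarrow> 'x topology" where
  "Ext_top X A m = topology_generated_by {{x\<in>X. m x a = r} | a r. a \<in> vcarrier A}"

definition Ext_alpha :: "'x set \<Rightarrow> ('a, 'l) valg \<Rightarrow> ('x \<Rightarrow> 'a \<Rightarrow> 'l) \<Rightarrow> 'l set \<Rightarrow> 'x set" where
  "Ext_alpha X A m K = {x\<in>X. \<forall>a\<in>vcarrier A. m x a \<in> K}"

text \<open>P on arrows: second component \<open>f\<^sup>-\<^sup>1(v) = v \<circ> f\<close> (restricted to the points of the source).\<close>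
definition P_arrow :: "'s topology \<Rightarrow> ('s \<Rightarrow> 't) \<Rightarrow> ('s \<Rightarrow> 't) \<times> (('t \<Rightarrow> 'l) \<Rightarrow> ('s \<Rightarrow> 'l))" where
  "P_arrow S f = (f, \<lambda>v. restrict (v \<circ> f) (topspace S))"

text \<open>Evaluation satisfaction relation of P(S,\<open>\<alpha>\<close>).\<close>
definition eval_sat :: "'s \<Rightarrow> ('s \<Rightarrow> 'l) \<Rightarrow> 'l" where
  "eval_sat s v = v s"

definition ext_l :: "'x set \<Rightarrow> ('x \<Rightarrow> 'a \<Rightarrow> 'l) \<Rightarrow> 'a \<Rightarrow> ('x \<Rightarrow> 'l)" where
  "ext_l X m a = restrict (\<lambda>x. m x a) X"

definition counit :: "'x set \<Rightarrow> ('x \<Rightarrow> 'a \<Rightarrow> 'l) \<Rightarrow> ('x \<Rightarrow> 'x) \<times> ('a \<Rightarrow> ('x \<Rightarrow> 'l))" where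
  "counit X m = (id, ext_l X m)"

end

theory Submission
  imports Defs
begin

lemma vle_char:
  assumes "vl_algebra (A :: ('a, 'l::finite_distrib_lattice) valg)"
  obtains I and h :: "'a \<Rightarrow> ('a \<Rightarrow> 'l::finite_distrib_lattice) \<Rightarrow> 'l"
  where "\<And>x y. x \<in> vcarrier A \<Longrightarrow> y \<in> vcarrier A \<Longrightarrow> vle A x y \<longleftrightarrow> (\<forall>i\<in>I. h x i \<le> h y i)"
    and "\<And>x y i. x \<in> vcarrier A \<Longrightarrow> y \<in> vcarrier A \<Longrightarrow> i \<in> I \<Longrightarrow> h (vjoin A x y) i = sup (h x i) (h y i)"
proof -
  have cl: "valg_closed A" using assms unfolding vl_algebra_def by blast
  from assms obtain I and h :: "'a \<Rightarrow> ('a \<Rightarrow> 'l) \<Rightarrow> 'l" where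
    inj: "\<forall>a\<in>vcarrier A. \<forall>b\<in>vcarrier A. a \<noteq> b \<longrightarrow> (\<exists>i\<in>I. h a i \<noteq> h b i)" and
    hom0: "\<forall>i\<in>I.
           (\<forall>a\<in>vcarrier A. \<forall>b\<in>vcarrier A.
              h (vmeet A a b) i = inf (h a i) (h b i) \<and>
              h (vjoin A a b) i = sup (h a i) (h b i) \<and>
              h (vimp A a b) i = himp (h a i) (h b i)) \<and>
           (\<forall>r::'l. \<forall>a\<in>vcarrier A. h (vT A r a) i = Tl r (h a i)) \<and>
           h (vzero A) i = bot \<and> h (vone A) i = top"
    unfolding vl_algebra_def by blast
  have hom: "\<forall>i\<in>I.
           (\<forall>a\<in>vcarrier A. \<forall>b\<in>vcarrier A.
              h (vmeet A a b) i = inf (h a i) (h b i) \<and>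
              h (vjoin A a b) i = sup (h a i) (h b i) \<and>
              h (vimp A a b) i = himp (h a i) (h b i))" using hom0 by blast
  have "vle A x y \<longleftrightarrow> (\<forall>i\<in>I. h x i \<le> h y i)" if x: "x \<in> vcarrier A" and y: "y \<in> vcarrier A" for x y
  proof
    assume "vle A x y"
    then have "vmeet A x y = x" by (simp add: vle_def)
    show "\<forall>i\<in>I. h x i \<le> h y i"
    proof
      fix i assume i: "i \<in> I"
      have "h x i = inf (h x i) (h y i)" using hom i x y \<open>vmeet A x y = x\<close> by metis
      then show "h x i \<le> h y i" by (metis inf.cobounded2)
    qed
  next
    assume le: "\<forall>i\<in>I. h x i \<le> h y i"
    have mc: "vmeet A x y \<in> vcarrier A" using cl x y unfolding valg_closed_def by blast
    have "\<forall>i\<in>I. h (vmeet A x y) i = h x i" using hom le x y by (simp add: inf.absorb1)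
    then show "vle A x y" unfolding vle_def using inj mc x by blast
  qed
  then show ?thesis using that hom by blast
qed

lemma vjoin_is_join:
  assumes "vl_algebra (A :: ('a, 'l::finite_distrib_lattice) valg)" "a \<in> vcarrier A" "b \<in> vcarrier A"
  shows "is_vjoin A {a,b} (vjoin A a b)"
proof -
  obtain I and h :: "'a \<Rightarrow> ('a \<Rightarrow> 'l) \<Rightarrow> 'l"
  where le: "\<And>x y. x \<in> vcarrier A \<Longrightarrow> y \<in> vcarrier A \<Longrightarrow> vle A x y \<longleftrightarrow> (\<forall>i\<in>I. h x i \<le> h y i)"
    and j: "\<And>x y i. x \<in> vcarrier A \<Longrightarrow> y \<in> vcarrier A \<Longrightarrow> i \<in> I \<Longrightarrow> h (vjoin A x y) i = sup (h x i) (h y i)"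
    using vle_char[OF assms(1)] by blast
  have jc: "vjoin A a b \<in> vcarrier A" using assms unfolding vl_algebra_def valg_closed_def by blast
  show ?thesis unfolding is_vjoin_def
    using jc le j assms(2,3) by auto
qed

theorem mainTheorem4:
  fixes X :: "'x set" and A :: "('a, 'l::finite_distrib_lattice) valg" and m :: "'x \<Rightarrow> 'a \<Rightarrow> 'l"
  assumes obj: "BSYM_obj X A m"
  shows
   "BSYM_arrow X (Cont_alg (Ext_top X A m) (Ext_alpha X A m)) eval_sat X A m (counit X m)
    \<and> (\<forall>(S :: 's topology) (\<alpha> :: 'l set \<Rightarrow> 's set) (f :: 's \<Rightarrow> 'x) (\<phi> :: 'a \<Rightarrow> ('s \<Rightarrow> 'l)).
         BS_obj S \<alpha> \<longrightarrow>
         BSYM_arrow (topspace S) (Cont_alg S \<alpha>) eval_sat X A m (f, \<phi>) \<longrightarrow>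
         (BS_arrow S \<alpha> (Ext_top X A m) (Ext_alpha X A m) f
          \<and> BSYM_arrow_eq (topspace S) A (f, \<phi>) (BSYM_comp (counit X m) (P_arrow S f))
          \<and> (\<forall>g. BS_arrow S \<alpha> (Ext_top X A m) (Ext_alpha X A m) g
                \<and> BSYM_arrow_eq (topspace S) A (f, \<phi>) (BSYM_comp (counit X m) (P_arrow S g))
                \<longrightarrow> (\<forall>s\<in>topspace S. g s = f s))))"
proof -
  have vl: "vl_algebra A" using obj unfolding BSYM_obj_def by blast
  then have cl: "valg_closed A" unfolding vl_algebra_def by blast
  have z: "vzero A \<in> vcarrier A" using cl unfolding valg_closed_def by blast
  have props: "\<And>x. x \<in> X \<Longrightarrow>
        (\<forall>A1 c. A1 \<subseteq> vcarrier A \<longrightarrow> is_vjoin A A1 c \<longrightarrow> m x c = Sup ((\<lambda>a. m x a) ` A1)) \<and>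
        (\<forall>a\<in>vcarrier A. \<forall>b\<in>vcarrier A. m x (vmeet A a b) = inf (m x a) (m x b)) \<and>
        (\<forall>a\<in>vcarrier A. \<forall>b\<in>vcarrier A. m x (vimp A a b) = himp (m x a) (m x b)) \<and>
        (\<forall>r. \<forall>a\<in>vcarrier A. m x (vT A r a) = Tl r (m x a)) \<and>
        m x (vzero A) = bot \<and> m x (vone A) = top"
    using obj unfolding BSYM_obj_def by blast
  have join: "m x (vjoin A a b) = sup (m x a) (m x b)" if "x \<in> X" "a \<in> vcarrier A" "b \<in> vcarrier A" for x a b
  proof -
    have "m x (vjoin A a b) = Sup ((\<lambda>a. m x a) ` {a,b})"
      using props[OF that(1)] vjoin_is_join[OF vl that(2,3)] that(2,3) by blast
    then show ?thesis by simp
  qed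
  have top: "topspace (Ext_top X A m) = X"
    unfolding Ext_top_def topology_generated_by_topspace using z by auto
  have cont: "ext_l X m a \<in> Cont (Ext_top X A m) (Ext_alpha X A m)" if a: "a \<in> vcarrier A" for a
  proof -
    have "continuous_map (Ext_top X A m) (discrete_topology (UNIV :: 'l set)) (ext_l X m a)"
      unfolding continuous_map_def top
    proof (intro conjI allI impI)
      fix U :: "'l set"
      have "{x \<in> X. ext_l X m a x \<in> U} = \<Union> ((\<lambda>r. {x\<in>X. m x a = r}) ` U)"
        by (auto simp: ext_l_def)
      moreover have "openin (Ext_top X A m) \<dots>"
        unfolding Ext_top_def using a by (intro openin_Union) (auto intro!: topology_generated_by_Basis)
      ultimately show "openin (Ext_top X A m) {x \<in> X. ext_l X m a x \<in> U}" by simp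
    qed auto
    moreover have "ext_l X m a \<in> extensional (topspace (Ext_top X A m))"
      unfolding top ext_l_def by simp
    moreover have "\<forall>L\<in>Subalg. ext_l X m a ` Ext_alpha X A m L \<subseteq> L"
      using a by (auto simp: ext_l_def Ext_alpha_def)
    ultimately show ?thesis unfolding Cont_def by blast
  qed
  have part1: "BSYM_arrow X (Cont_alg (Ext_top X A m) (Ext_alpha X A m)) eval_sat X A m (counit X m)"
  proof -
    let ?C = "Cont_alg (Ext_top X A m) (Ext_alpha X A m)"
    have h1: "\<forall>a\<in>vcarrier A. ext_l X m a \<in> vcarrier ?C"
      using cont by (simp add: Cont_alg_def)
    have h2: "\<forall>a\<in>vcarrier A. \<forall>b\<in>vcarrier A.
        ext_l X m (vmeet A a b) = vmeet ?C (ext_l X m a) (ext_l X m b) \<and>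
        ext_l X m (vjoin A a b) = vjoin ?C (ext_l X m a) (ext_l X m b) \<and>
        ext_l X m (vimp A a b) = vimp ?C (ext_l X m a) (ext_l X m b)"
    proof (intro ballI conjI)
      fix a b assume a: "a \<in> vcarrier A" and b: "b \<in> vcarrier A"
      show "ext_l X m (vmeet A a b) = vmeet ?C (ext_l X m a) (ext_l X m b)"
        unfolding Cont_alg_def top ext_l_def using props a b
        by (intro ext) (simp add: restrict_def)
      show "ext_l X m (vjoin A a b) = vjoin ?C (ext_l X m a) (ext_l X m b)"
        unfolding Cont_alg_def top ext_l_def using join a b
        by (intro ext) (simp add: restrict_def)
      show "ext_l X m (vimp A a b) = vimp ?C (ext_l X m a) (ext_l X m b)"
        unfolding Cont_alg_def top ext_l_def using props a b
        by (intro ext) (simp add: restrict_def)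
    qed
    have h3: "\<forall>r. \<forall>a\<in>vcarrier A. ext_l X m (vT A r a) = vT ?C r (ext_l X m a)"
    proof (intro allI ballI)
      fix r a assume a: "a \<in> vcarrier A"
      show "ext_l X m (vT A r a) = vT ?C r (ext_l X m a)"
        unfolding Cont_alg_def top ext_l_def using props a
        by (intro ext) (simp add: restrict_def)
    qed
    have h4: "ext_l X m (vzero A) = vzero ?C" "ext_l X m (vone A) = vone ?C"
      unfolding Cont_alg_def top ext_l_def using props
      by (intro ext; simp add: restrict_def)+
    have "valg_hom A ?C (ext_l X m)"
      unfolding valg_hom_def using h1 h2 h3 h4 by blast
    moreover have "\<forall>x\<in>X. \<forall>b\<in>vcarrier A. eval_sat x (ext_l X m b) = m (id x) b"
      by (simp add: eval_sat_def ext_l_def)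
    ultimately show ?thesis unfolding BSYM_arrow_def counit_def by simp
  qed
  show ?thesis
  proof (intro conjI allI impI part1)
    fix S :: "'s topology" and \<alpha> :: "'l set \<Rightarrow> 's set" and f :: "'s \<Rightarrow> 'x" and \<phi> :: "'a \<Rightarrow> 's \<Rightarrow> 'l"
    assume bs: "BS_obj S \<alpha>" and ar: "BSYM_arrow (topspace S) (Cont_alg S \<alpha>) eval_sat X A m (f, \<phi>)"
    have fX: "\<And>s. s \<in> topspace S \<Longrightarrow> f s \<in> X" using ar unfolding BSYM_arrow_def by auto
    have phiC: "\<And>a. a \<in> vcarrier A \<Longrightarrow> \<phi> a \<in> Cont S \<alpha>"
      using ar unfolding BSYM_arrow_def valg_hom_def Cont_alg_def by auto
    have eq: "\<And>s a. s \<in> topspace S \<Longrightarrow> a \<in> vcarrier A \<Longrightarrow> \<phi> a s = m (f s) a"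
      using ar unfolding BSYM_arrow_def eval_sat_def by auto
    have "continuous_map S (Ext_top X A m) f"
      unfolding Ext_top_def
    proof (rule continuous_on_generated_topo)
      fix U assume "U \<in> {{x\<in>X. m x a = r} | a r. a \<in> vcarrier A}"
      then obtain a r where a: "a \<in> vcarrier A" and U: "U = {x\<in>X. m x a = r}" by blast
      have "f -` U \<inter> topspace S = {s \<in> topspace S. \<phi> a s \<in> {r}}"
        using fX eq a U by auto
      moreover have cm: "continuous_map S (discrete_topology (UNIV :: 'l set)) (\<phi> a)"
        using phiC[OF a] unfolding Cont_def by blast
      have "\<forall>U. openin S {x \<in> topspace S. \<phi> a x \<in> U}"
        using cm by (simp add: continuous_map_def)
      then have "openin S {s \<in> topspace S. \<phi> a s \<in> {r}}" by (rule spec)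
      ultimately show "openin S (f -` U \<inter> topspace S)" by simp
    next
      show "f ` topspace S \<subseteq> \<Union> {{x\<in>X. m x a = r} | a r. a \<in> vcarrier A}"
        using fX z by auto
    qed
    moreover have "\<forall>L\<in>Subalg. f ` \<alpha> L \<subseteq> Ext_alpha X A m L"
    proof (intro ballI subsetI)
      fix L y assume L: "L \<in> Subalg" and y: "y \<in> f ` \<alpha> L"
      then obtain s where s: "s \<in> \<alpha> L" "y = f s" by blast
      have "\<alpha> L \<subseteq> topspace S" using bs L unfolding BS_obj_def using closedin_subset by blast
      then have st: "s \<in> topspace S" using s by blast
      have "\<forall>a\<in>vcarrier A. m (f s) a \<in> L"
        using phiC eq st s L unfolding Cont_def by (metis (no_types, lifting) image_subset_iff mem_Collect_eq)
      then show "y \<in> Ext_alpha X A m L" using fX[OF st] s unfolding Ext_alpha_def by auto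
    qed
    ultimately show "BS_arrow S \<alpha> (Ext_top X A m) (Ext_alpha X A m) f"
      unfolding BS_arrow_def by blast
    have "\<forall>b\<in>vcarrier A. \<phi> b = restrict (ext_l X m b \<circ> f) (topspace S)"
    proof
      fix b assume b: "b \<in> vcarrier A"
      have ext: "\<phi> b \<in> extensional (topspace S)" using phiC[OF b] unfolding Cont_def by blast
      show "\<phi> b = restrict (ext_l X m b \<circ> f) (topspace S)"
      proof
        fix s show "\<phi> b s = restrict (ext_l X m b \<circ> f) (topspace S) s"
          using ext eq[OF _ b, of s] fX[of s] by (auto simp: ext_l_def extensional_def)
      qed
    qed
    then show "BSYM_arrow_eq (topspace S) A (f, \<phi>) (BSYM_comp (counit X m) (P_arrow S f))"
      unfolding BSYM_arrow_eq_def BSYM_comp_def counit_def P_arrow_def by simp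
  next
    fix S :: "'s topology" and \<alpha> :: "'l set \<Rightarrow> 's set" and f :: "'s \<Rightarrow> 'x" and \<phi> :: "'a \<Rightarrow> 's \<Rightarrow> 'l" and g
    assume "BS_arrow S \<alpha> (Ext_top X A m) (Ext_alpha X A m) g
                \<and> BSYM_arrow_eq (topspace S) A (f, \<phi>) (BSYM_comp (counit X m) (P_arrow S g))"
    then show "\<forall>s\<in>topspace S. g s = f s"
      by (auto simp: BSYM_arrow_eq_def BSYM_comp_def counit_def P_arrow_def)
  qed
qed

end
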